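(* Let $P\subset\mathbb R^2$ be a polygon that is $\mathbb Z$-$\Delta_2$-free, inclusion-maximal among $\mathbb Z$-$\Delta_2$-free convex bodies, and whose interior contains exactly one lattice point of $\mathbb Z^2$. Then $\mathrm{width}(P)\le 3$.
   Context: A polygon is a two-dimensional convex polytope in $\mathbb R^2$. $\Delta_2=\mathrm{conv}(\mathbf 0,e_1,e_2)$. A $\mathbb Z$-unimodular copy of $X$ is $T(X)$ where $T(x)=Mx+b$, $M\in\mathrm{GL}_2(\mathbb Z)$, $b\in\mathbb Z^2$. A convex set is $\mathbb Z$-$\Delta_2$-free if its relative interior contains no $\mathbb Z$-unimodular copy of $\Delta_2$. Lattice width: $\mathrm{width}(K)=\inf_{u\in(\mathbb Z^2)^*\setminus\{0\}}\sup_{x,y\in K}|u(x)-u(y)|$. *)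

theory Defs
  imports "HOL-Analysis.Analysis"
begin

definition lattice_point :: "real^2 \<Rightarrow> bool" where
  "lattice_point x \<longleftrightarrow> x$1 \<in> \<int> \<and> x$2 \<in> \<int>"

definition Delta2 :: "(real^2) set" where
  "Delta2 = convex hull {0, axis 1 1, axis 2 1}"

definition Z_unimodular_copy :: "(real^2) set \<Rightarrow> (real^2) set \<Rightarrow> bool" where
  "Z_unimodular_copy X S \<longleftrightarrow>
     (\<exists>(M::real^2^2) b. (\<forall>i j. M$i$j \<in> \<int>) \<and> \<bar>det M\<bar> = 1 \<and> lattice_point b \<and>
        S = (\<lambda>x. M *v x + b) ` X)"

definition Z_Delta2_free :: "(real^2) set \<Rightarrow> bool" where
  "Z_Delta2_free K \<longleftrightarrow> convex K \<and>
     \<not> (\<exists>S. Z_unimodular_copy Delta2 S \<and> S \<subseteq> rel_interior K)"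

definition convex_body :: "(real^2) set \<Rightarrow> bool" where
  "convex_body K \<longleftrightarrow> compact K \<and> convex K \<and> interior K \<noteq> {}"

definition polygon :: "(real^2) set \<Rightarrow> bool" where
  "polygon P \<longleftrightarrow> polytope P \<and> aff_dim P = 2"

definition maximal_Z_Delta2_free :: "(real^2) set \<Rightarrow> bool" where
  "maximal_Z_Delta2_free P \<longleftrightarrow>
     (\<forall>K. convex_body K \<and> Z_Delta2_free K \<and> P \<subseteq> K \<longrightarrow> K = P)"

definition lattice_width :: "(real^2) set \<Rightarrow> real" where
  "lattice_width K = (INF u \<in> {u. lattice_point u \<and> u \<noteq> 0}.
       SUP x \<in> K. SUP y \<in> K. \<bar>u \<bullet> x - u \<bullet> y\<bar>)"

end

theory Submission
  imports Defs
begin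


lemma inner2: "(x::real^2) \<bullet> y = x$1*y$1 + x$2*y$2"
  by (simp add: inner_vec_def sum_2)

lemma vec2_eq: "(x::real^2) = y \<longleftrightarrow> x$1 = y$1 \<and> x$2 = y$2"
  by (simp add: vec_eq_iff forall_2)

lemma lattice_inner: "lattice_point a \<Longrightarrow> lattice_point b \<Longrightarrow> a \<bullet> b \<in> \<int>"
  by (simp add: inner2 lattice_point_def)

lemma lattice_diff: "lattice_point a \<Longrightarrow> lattice_point b \<Longrightarrow> lattice_point (a - b)"
  by (simp add: lattice_point_def)

lemma Ints_lt1: "(x::real) \<in> \<int> \<Longrightarrow> x < 1 \<Longrightarrow> x \<le> 0"
  by (elim Ints_cases) simp

lemma Ints_gt0: "(x::real) \<in> \<int> \<Longrightarrow> 0 < x \<Longrightarrow> 1 \<le> x"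
  by (metis Ints_cases of_int_0_less_iff of_int_1_le_iff int_one_le_iff_zero_less)

lemma finite_lattice_bounded:
  assumes "bounded S"
  shows "finite {y. lattice_point y \<and> y \<in> S}"
proof -
  obtain B where B: "\<And>x. x \<in> S \<Longrightarrow> norm x \<le> B" using assms bounded_iff by metis
  define N where "N = \<lceil>B\<rceil>"
  have "{y. lattice_point y \<and> y \<in> S} \<subseteq>
     (\<lambda>(i,j). vector [real_of_int i, real_of_int j] :: real^2) ` ({-N..N} \<times> {-N..N})"
  proof
    fix y assume y: "y \<in> {y. lattice_point y \<and> y \<in> S}"
    then obtain i j where i: "y$1 = of_int i" and j: "y$2 = of_int j"
      by (auto simp: lattice_point_def elim!: Ints_cases)
    have "\<bar>y$1\<bar> \<le> B" "\<bar>y$2\<bar> \<le> B"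
      using y B component_le_norm_cart[of y] by (auto intro: order_trans)
    hence "real_of_int \<bar>i\<bar> \<le> B" "real_of_int \<bar>j\<bar> \<le> B" using i j by simp_all
    hence "\<bar>i\<bar> \<le> N" "\<bar>j\<bar> \<le> N" unfolding N_def
      by (metis ceiling_mono ceiling_of_int)+
    moreover have "y = vector [real_of_int i, real_of_int j]"
      using i j by (simp add: vec2_eq)
    ultimately show "y \<in> (\<lambda>(i,j). vector [real_of_int i, real_of_int j] :: real^2) ` ({-N..N} \<times> {-N..N})"
      by (auto intro!: image_eqI[where x="(i,j)"])
  qed
  thus ?thesis by (rule finite_subset) auto
qed


lemma width_le:
  assumes u: "lattice_point u" "u \<noteq> 0" and ne: "P \<noteq> {}" and bd: "bounded P"
    and rng: "\<And>x. x \<in> P \<Longrightarrow> m \<le> u \<bullet> x \<and> u \<bullet> x \<le> m + 3"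
  shows "lattice_width P \<le> 3"
proof -
  obtain B where B: "\<And>x. x \<in> P \<Longrightarrow> norm x \<le> B" using bd bounded_iff by metis
  define f where "f v = (SUP x \<in> P. SUP y \<in> P. \<bar>v \<bullet> x - v \<bullet> y\<bar>)" for v :: "real^2"
  have bnd: "\<bar>v \<bullet> x - v \<bullet> y\<bar> \<le> 2 * norm v * B" if "x \<in> P" "y \<in> P" for v x y
  proof -
    have "\<bar>v \<bullet> x - v \<bullet> y\<bar> \<le> \<bar>v \<bullet> x\<bar> + \<bar>v \<bullet> y\<bar>" by (rule abs_triangle_ineq4)
    also have "\<dots> \<le> norm v * norm x + norm v * norm y"
      by (intro add_mono Cauchy_Schwarz_ineq2)
    also have "\<dots> \<le> norm v * B + norm v * B"
      using B[OF that(1)] B[OF that(2)] by (intro add_mono mult_left_mono) auto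
    finally show ?thesis by (simp add: algebra_simps)
  qed
  have inner_bdd: "bdd_above ((\<lambda>y. \<bar>v \<bullet> x - v \<bullet> y\<bar>) ` P)" if "x \<in> P" for v x
    unfolding bdd_above_def using bnd[OF that] by blast
  have inner_le: "(SUP y \<in> P. \<bar>v \<bullet> x - v \<bullet> y\<bar>) \<le> 2 * norm v * B" if "x \<in> P" for v x
    by (rule cSUP_least[OF ne]) (rule bnd[OF that])
  have f_ge0: "0 \<le> f v" for v
  proof -
    obtain x0 where x0: "x0 \<in> P" using ne by auto
    have "0 \<le> \<bar>v \<bullet> x0 - v \<bullet> x0\<bar>" by simp
    also have "\<dots> \<le> (SUP y \<in> P. \<bar>v \<bullet> x0 - v \<bullet> y\<bar>)"
      by (rule cSUP_upper[OF x0 inner_bdd[OF x0]])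
    also have "\<dots> \<le> f v" unfolding f_def
    proof (rule cSUP_upper[OF x0])
      show "bdd_above ((\<lambda>x. SUP y \<in> P. \<bar>v \<bullet> x - v \<bullet> y\<bar>) ` P)"
        unfolding bdd_above_def using inner_le by blast
    qed
    finally show ?thesis .
  qed
  have "f u \<le> 3" unfolding f_def
  proof (rule cSUP_least[OF ne])
    fix x assume x: "x \<in> P"
    show "(SUP y \<in> P. \<bar>u \<bullet> x - u \<bullet> y\<bar>) \<le> 3"
    proof (rule cSUP_least[OF ne])
      fix y assume y: "y \<in> P"
      show "\<bar>u \<bullet> x - u \<bullet> y\<bar> \<le> 3" using rng[OF x] rng[OF y] by (simp add: abs_le_iff)
    qed
  qed
  moreover have "lattice_width P \<le> f u"
    unfolding lattice_width_def f_def[symmetric]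
  proof (rule cINF_lower)
    show "bdd_below (f ` {u. lattice_point u \<and> u \<noteq> 0})"
      unfolding bdd_below_def using f_ge0 by blast
    show "u \<in> {u. lattice_point u \<and> u \<noteq> 0}" using u by simp
  qed
  ultimately show ?thesis by simp
qed

lemma comb:
  fixes u ur ul al be y :: "real^2"
  assumes lat: "lattice_point ur" "lattice_point ul" "lattice_point al" "lattice_point be"
    and ua: "u \<bullet> al = 1" and ub: "u \<bullet> be = 1"
    and det: "\<bar>al$1*be$2 - al$2*be$1\<bar> = 1"
    and rp: "ur \<bullet> (be - al) > 0" and lp: "ul \<bullet> (be - al) < 0"
    and ra: "ur \<bullet> al < 1" and rb: "ur \<bullet> be < 1" and la: "ul \<bullet> al < 1"
    and ry: "ur \<bullet> y \<le> 1" and ly: "ul \<bullet> y \<le> 1"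
  shows "- (u \<bullet> y) \<le> 2"
proof -
  define d where "d = be - al"
  have ld: "lattice_point d" using lat by (simp add: d_def lattice_diff)
  define pr where "pr = ur \<bullet> d"
  define qr where "qr = ur \<bullet> al"
  define pl where "pl = ul \<bullet> d"
  define ql where "ql = ul \<bullet> al"
  have Z: "pr \<in> \<int>" "qr \<in> \<int>" "pl \<in> \<int>" "ql \<in> \<int>"
    using lat ld by (auto simp: pr_def qr_def pl_def ql_def lattice_inner)
  have "ur \<bullet> be \<in> \<int>" using lat by (simp add: lattice_inner)
  have pr1: "pr \<ge> 1" using Ints_gt0[OF Z(1)] rp by (simp add: pr_def d_def)
  have pl1: "pl \<le> -1"
  proof -
    have "-pl \<in> \<int>" using Z by simp
    moreover have "-pl > 0" using lp by (simp add: pl_def d_def)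
    ultimately show ?thesis using Ints_gt0 by fastforce
  qed
  have ql0: "ql \<le> 0" using Ints_lt1[OF Z(4)] la by (simp add: ql_def)
  have "ur \<bullet> be = pr + qr" by (simp add: pr_def qr_def d_def inner_diff_right)
  hence prqr: "pr + qr \<le> 0" using Ints_lt1[OF \<open>ur \<bullet> be \<in> \<int>\<close>] rb by simp
  define D where "D = pl * qr - pr * ql"
  have "pl * qr \<ge> (-pl) * pr"
  proof -
    have "qr \<le> - pr" using prqr by simp
    from mult_left_mono_neg[OF this] pl1 show ?thesis by simp
  qed
  moreover have "- pr * ql \<ge> 0" using pr1 ql0 by (simp add: mult_nonneg_nonpos)
  ultimately have D1: "D \<ge> (-pl) * pr" by (simp add: D_def)
  have "(-pl) * pr \<ge> -pl" using mult_left_mono[of 1 pr "-pl"] pr1 pl1 by simp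
  moreover have "(-pl) * pr \<ge> pr" using mult_right_mono[of 1 "-pl" pr] pr1 pl1 by simp
  ultimately have Dge: "2 * D \<ge> pr - pl" using D1 by linarith
  have Dpos: "D > 0" using Dge pr1 pl1 by linarith
  define lam where "lam = - pl / D"
  define mu where "mu = pr / D"
  define w where "w = lam *\<^sub>R ur + mu *\<^sub>R ul + u"
  have ud: "u \<bullet> d = 0" using ua ub by (simp add: d_def inner_diff_right)
  have "w \<bullet> al = lam * qr + mu * ql + 1"
    by (simp add: w_def inner_add_left qr_def ql_def ua)
  also have "lam * qr + mu * ql = (- pl * qr + pr * ql) / D"
    by (simp add: lam_def mu_def add_divide_distrib diff_divide_distrib)
  also have "(- pl * qr + pr * ql) = - D" by (simp add: D_def)
  finally have wa: "w \<bullet> al = 0" using Dpos by simp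
  have "w \<bullet> d = lam * pr + mu * pl"
    by (simp add: w_def inner_add_left pr_def pl_def ud)
  also have "lam * pr + mu * pl = (- pl * pr + pr * pl) / D"
    by (simp add: lam_def mu_def add_divide_distrib)
  finally have wd: "w \<bullet> d = 0" by simp
  have detd: "al$1*d$2 - al$2*d$1 \<noteq> 0"
    using det by (auto simp: d_def algebra_simps)
  have w0: "w = 0"
  proof -
    have e1: "w$1*al$1 + w$2*al$2 = 0" "w$1*d$1 + w$2*d$2 = 0"
      using wa wd by (simp_all add: inner2)
    have "w$1 * (al$1*d$2 - al$2*d$1) = d$2*(w$1*al$1 + w$2*al$2) - al$2*(w$1*d$1 + w$2*d$2)"
      by (simp add: algebra_simps)
    hence "w$1 * (al$1*d$2 - al$2*d$1) = 0" using e1 by simp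
    moreover have "w$2 * (al$1*d$2 - al$2*d$1) = al$1*(w$1*d$1 + w$2*d$2) - d$1*(w$1*al$1 + w$2*al$2)"
      by (simp add: algebra_simps)
    hence "w$2 * (al$1*d$2 - al$2*d$1) = 0" using e1 by simp
    ultimately show ?thesis using detd by (simp add: vec2_eq)
  qed
  have "w \<bullet> y = lam * (ur \<bullet> y) + mu * (ul \<bullet> y) + u \<bullet> y"
    by (simp add: w_def inner_add_left)
  hence "u \<bullet> y = - (lam * (ur \<bullet> y) + mu * (ul \<bullet> y))" using w0 by simp
  moreover have "lam \<ge> 0" "mu \<ge> 0" using Dpos pl1 pr1 by (simp_all add: lam_def mu_def divide_nonpos_pos)
  hence "lam * (ur \<bullet> y) \<le> lam" "mu * (ul \<bullet> y) \<le> mu"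
    using mult_left_mono[OF ry, of lam] mult_left_mono[OF ly, of mu] by simp_all
  moreover have "lam + mu \<le> 2" using Dpos Dge
    by (simp add: lam_def mu_def field_simps add_divide_distrib[symmetric])
  ultimately show ?thesis by linarith
qed


lemma lattice_normal:
  fixes u al be :: "real^2"
  assumes "lattice_point al" "lattice_point be" "\<bar>al$1*be$2 - al$2*be$1\<bar> = 1"
    "u \<bullet> al = 1" "u \<bullet> be = 1"
  shows "lattice_point u"
proof -
  define \<delta> where "\<delta> = al$1*be$2 - al$2*be$1"
  have e: "u$1*al$1 + u$2*al$2 = 1" "u$1*be$1 + u$2*be$2 = 1" using assms by (simp_all add: inner2)
  have "u$1 * \<delta> = be$2*(u$1*al$1 + u$2*al$2) - al$2*(u$1*be$1 + u$2*be$2)"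
    by (simp add: \<delta>_def algebra_simps)
  hence 1: "u$1 * \<delta> = be$2 - al$2" using e by simp
  have "u$2 * \<delta> = al$1*(u$1*be$1 + u$2*be$2) - be$1*(u$1*al$1 + u$2*al$2)"
    by (simp add: \<delta>_def algebra_simps)
  hence 2: "u$2 * \<delta> = al$1 - be$1" using e by simp
  have d: "\<delta> = 1 \<or> \<delta> = -1" using assms(3) by (auto simp: \<delta>_def abs_if split: if_splits)
  have Z: "be$2 - al$2 \<in> \<int>" "al$1 - be$1 \<in> \<int>" "al$2 - be$2 \<in> \<int>" "be$1 - al$1 \<in> \<int>"
    using assms(1,2) by (auto simp: lattice_point_def)
  show ?thesis using d
  proof
    assume "\<delta> = 1" thus ?thesis using 1 2 Z unfolding lattice_point_def by simp
  next
    assume "\<delta> = -1"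
    have "u$1 * \<delta> = - u$1" "u$2 * \<delta> = - u$2" using \<open>\<delta> = -1\<close> by simp_all
    hence "u$1 = -(be$2 - al$2)" "u$2 = -(al$1 - be$1)" using 1 2 by linarith+
    thus ?thesis using Z(1,2) unfolding lattice_point_def by (metis Ints_minus)
  qed
qed



lemma facet_lattice:
  fixes P :: "(real^2) set" and F :: "(real^2) set set" and A :: "(real^2) set \<Rightarrow> real^2"
  assumes fin: "finite F"
    and PF: "P = \<Inter>F"
    and AB: "\<And>h. h \<in> F \<Longrightarrow> A h \<noteq> 0 \<and> h = {x. A h \<bullet> x \<le> B h}"
    and minF: "\<And>F'. F' \<subset> F \<Longrightarrow> P \<subset> \<Inter>F'"
    and cP: "compact P" "convex P"
    and z: "z \<in> interior P" "lattice_point z"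
    and uniq: "\<And>y. y \<in> interior P \<Longrightarrow> lattice_point y \<Longrightarrow> y = z"
    and maxi: "maximal_Z_Delta2_free P"
    and k: "k \<in> F"
  shows "\<exists>al be. lattice_point al \<and> lattice_point be \<and> \<bar>al$1*be$2 - al$2*be$1\<bar> = 1 \<and>
     A k \<bullet> (z+al) = B k \<and> A k \<bullet> (z+be) = B k \<and>
     (\<forall>i\<in>F. i \<noteq> k \<longrightarrow> A i \<bullet> (z+al) < B i \<and> A i \<bullet> (z+be) < B i)"
proof -
  define h where "h = A k"
  define c where "c = B k"
  have h0: "h \<noteq> 0" using AB k by (simp add: h_def)
  have memP: "x \<in> P \<longleftrightarrow> (\<forall>i\<in>F. A i \<bullet> x \<le> B i)" for x
    using AB by (subst PF) blast
  have zs: "A i \<bullet> z < B i" if "i \<in> F" for i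
  proof -
    have "P \<subseteq> {x. A i \<bullet> x \<le> B i}" using memP that by auto
    hence "interior P \<subseteq> {x. A i \<bullet> x < B i}"
      using interior_mono AB[OF that] interior_halfspace_le by metis
    thus ?thesis using z by auto
  qed
  have strict_int: "y \<in> interior P" if "\<forall>i\<in>F. A i \<bullet> y < B i" for y
  proof -
    have "open (\<Inter>i\<in>F. {x. A i \<bullet> x < B i})"
      using fin by (intro open_INT) (auto simp: open_halfspace_lt)
    moreover have "(\<Inter>i\<in>F. {x. A i \<bullet> x < B i}) \<subseteq> P" using memP by fastforce
    ultimately have "(\<Inter>i\<in>F. {x. A i \<bullet> x < B i}) \<subseteq> interior P"
      by (simp add: interior_maximal)
    thus ?thesis using that by blast
  qed
  obtain x where x1: "x \<in> \<Inter>(F - {k})" and x2: "x \<notin> P"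
    using minF[of "F - {k}"] k by blast
  have xo: "A i \<bullet> x \<le> B i" if "i \<in> F" "i \<noteq> k" for i
    using x1 that AB by blast
  have hx: "h \<bullet> x > c"
  proof (rule ccontr)
    assume "\<not> c < h \<bullet> x"
    hence "x \<in> P" using memP xo by (auto simp: h_def c_def) (metis not_le)
    thus False using x2 by simp
  qed
  have hz: "h \<bullet> z < c" using zs k by (simp add: h_def c_def)
  define s where "s = (c - h \<bullet> z) / (h \<bullet> x - h \<bullet> z)"
  have s01: "0 < s" "s < 1" using hx hz by (auto simp: s_def divide_simps)
  define q where "q = z + s *\<^sub>R (x - z)"
  have qi: "A i \<bullet> q = (1 - s) * (A i \<bullet> z) + s * (A i \<bullet> x)" for i
    by (simp add: q_def inner_add_right inner_diff_right algebra_simps)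
  have "h \<bullet> q = h \<bullet> z + s * (h \<bullet> x - h \<bullet> z)"
    by (simp add: q_def inner_add_right inner_diff_right)
  also have "s * (h \<bullet> x - h \<bullet> z) = c - h \<bullet> z" using hx hz by (simp add: s_def)
  finally have hq: "h \<bullet> q = c" by simp
  have qo: "A i \<bullet> q < B i" if "i \<in> F" "i \<noteq> k" for i
  proof -
    have "(1 - s) * (A i \<bullet> z) < (1 - s) * B i" using zs[OF that(1)] s01 by simp
    moreover have "s * (A i \<bullet> x) \<le> s * B i" using xo[OF that] s01 by simp
    ultimately show ?thesis by (simp add: qi algebra_simps)
  qed
  have qP: "q \<in> P" using memP qo hq by (metis h_def c_def less_imp_le order_refl)
  define K1 where "K1 = convex hull (insert (q + h) P)"
  have cK1: "compact K1" "convex K1" using cP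
    by (simp_all add: K1_def compact_convex_hull)
  define Y where "Y = {y. lattice_point y \<and> y \<in> K1 \<and> h \<bullet> y > c}"
  have finY: "finite Y"
    by (rule finite_subset[OF _ finite_lattice_bounded[OF compact_imp_bounded[OF cK1(1)]]])
       (auto simp: Y_def)
  have hh: "h \<bullet> h > 0" using h0 by simp
  have ev: "eventually (\<lambda>t. 0 < t \<and> t < 1 \<and> (\<forall>i\<in>F - {k}. A i \<bullet> (q + t *\<^sub>R h) < B i)
             \<and> (\<forall>y\<in>Y. t * (h \<bullet> h) < h \<bullet> y - c)) (at_right (0::real))"
  proof (intro eventually_conj eventually_ball_finite ballI)
    show "eventually (\<lambda>t. 0 < t) (at_right (0::real))" by (rule eventually_at_right_less)
    have "((\<lambda>t. t) \<longlongrightarrow> (0::real)) (at_right 0)" by (intro tendsto_intros)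
    thus "eventually (\<lambda>t. t < 1) (at_right (0::real))" by (rule order_tendstoD) simp
    show "finite (F - {k})" using fin by simp
    show "finite Y" by (rule finY)
    fix i assume i: "i \<in> F - {k}"
    have "((\<lambda>t. A i \<bullet> (q + t *\<^sub>R h)) \<longlongrightarrow> A i \<bullet> (q + 0 *\<^sub>R h)) (at_right 0)"
      by (intro tendsto_intros)
    thus "eventually (\<lambda>t. A i \<bullet> (q + t *\<^sub>R h) < B i) (at_right (0::real))"
      by (rule order_tendstoD) (use qo i in auto)
  next
    fix y assume y: "y \<in> Y"
    have "((\<lambda>t. t * (h \<bullet> h)) \<longlongrightarrow> 0 * (h \<bullet> h)) (at_right 0)"
      by (intro tendsto_intros)
    thus "eventually (\<lambda>t. t * (h \<bullet> h) < h \<bullet> y - c) (at_right (0::real))"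
      by (rule order_tendstoD) (use y in \<open>auto simp: Y_def\<close>)
  qed
  then obtain t where t0: "0 < t" and t1: "t < 1"
    and tF: "\<forall>i\<in>F - {k}. A i \<bullet> (q + t *\<^sub>R h) < B i"
    and tY: "\<forall>y\<in>Y. t * (h \<bullet> h) < h \<bullet> y - c"
    using eventually_happens'[OF trivial_limit_at_right_real] by blast
  define p where "p = q + t *\<^sub>R h"
  define K where "K = convex hull (insert p P)"
  have cK: "compact K" "convex K" using cP by (simp_all add: K_def compact_convex_hull)
  have PK: "P \<subseteq> K" by (auto simp: K_def hull_inc)
  have hp: "h \<bullet> p = c + t * (h \<bullet> h)" using hq by (simp add: p_def inner_add_right)
  have "h \<bullet> p > c" using hp t0 hh by (simp add: mult_pos_pos)
  hence pnP: "p \<notin> P" using memP k unfolding h_def c_def by (meson not_le)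
  have pK: "p \<in> K" by (simp add: K_def hull_inc)
  have intK: "interior K \<noteq> {}" using z interior_mono[OF PK] by auto
  have "\<not> Z_Delta2_free K"
  proof
    assume "Z_Delta2_free K"
    hence "K = P" using maxi cK intK PK unfolding maximal_Z_Delta2_free_def convex_body_def by blast
    thus False using pK pnP by simp
  qed
  then obtain S where S: "Z_unimodular_copy Delta2 S" "S \<subseteq> interior K"
    using cK rel_interior_nonempty_interior[OF intK] unfolding Z_Delta2_free_def by auto
  then obtain M b0 where M: "\<forall>i j. M$i$j \<in> \<int>" "\<bar>det M\<bar> = 1" "lattice_point b0"
    and SM: "S = (\<lambda>x. M *v x + b0) ` Delta2"
    unfolding Z_unimodular_copy_def by blast
  have Kint_o: "A i \<bullet> v < B i" if "v \<in> interior K" "i \<in> F" "i \<noteq> k" for i v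
  proof -
    have "insert p P \<subseteq> {x. A i \<bullet> x \<le> B i}"
      using tF that(2,3) memP that(2) by (auto simp: p_def less_imp_le)
    hence "K \<subseteq> {x. A i \<bullet> x \<le> B i}" unfolding K_def
      by (rule hull_minimal) (rule convex_halfspace_le)
    hence "interior K \<subseteq> {x. A i \<bullet> x < B i}"
      using interior_mono AB[OF that(2)] interior_halfspace_le by metis
    thus ?thesis using that(1) by auto
  qed
  have K_h: "K \<subseteq> {x. h \<bullet> x \<le> c + t * (h \<bullet> h)}"
  proof -
    have "insert p P \<subseteq> {x. h \<bullet> x \<le> c + t * (h \<bullet> h)}"
    proof
      fix x assume "x \<in> insert p P"
      moreover have "t * (h \<bullet> h) \<ge> 0" using t0 hh by simp
      ultimately show "x \<in> {x. h \<bullet> x \<le> c + t * (h \<bullet> h)}"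
        using hp memP k unfolding h_def c_def by force
    qed
    thus ?thesis unfolding K_def by (rule hull_minimal) (rule convex_halfspace_le)
  qed
  have KK1: "K \<subseteq> K1"
  proof -
    have "q \<in> K1" "q + h \<in> K1" using qP by (auto simp: K1_def hull_inc)
    hence "(1 - t) *\<^sub>R q + t *\<^sub>R (q + h) \<in> K1"
      using t0 t1 by (intro convexD[OF cK1(2)]) auto
    moreover have "(1 - t) *\<^sub>R q + t *\<^sub>R (q + h) = p"
      by (simp add: p_def algebra_simps)
    ultimately have "insert p P \<subseteq> K1" by (auto simp: K1_def hull_inc)
    thus ?thesis unfolding K_def by (rule hull_minimal) (rule cK1(2))
  qed
  define G where "G v \<longleftrightarrow> h \<bullet> v = c \<and> (\<forall>i\<in>F. i \<noteq> k \<longrightarrow> A i \<bullet> v < B i)" for v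
  have key: "v = z \<or> G v" if v: "v \<in> interior K" "lattice_point v" for v
  proof -
    have oth: "\<forall>i\<in>F. i \<noteq> k \<longrightarrow> A i \<bullet> v < B i" using Kint_o v(1) by blast
    consider "h \<bullet> v < c" | "h \<bullet> v = c" | "h \<bullet> v > c" by linarith
    thus ?thesis
    proof cases
      case 1
      hence "\<forall>i\<in>F. A i \<bullet> v < B i" using oth unfolding h_def c_def by metis
      hence "v \<in> interior P" by (rule strict_int)
      thus ?thesis using uniq v(2) by simp
    next
      case 2 thus ?thesis using oth by (simp add: G_def)
    next
      case 3
      have vK: "v \<in> K" using v(1) interior_subset by blast
      hence "v \<in> Y" using KK1 3 v(2) by (auto simp: Y_def)
      hence "t * (h \<bullet> h) < h \<bullet> v - c" using tY by blast
      moreover have "h \<bullet> v \<le> c + t * (h \<bullet> h)" using K_h vK by blast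
      ultimately show ?thesis by simp
    qed
  qed
  define c1 where "c1 = M *v axis 1 1"
  define c2 where "c2 = M *v axis 2 1"
  have c1c: "c1$1 = M$1$1" "c1$2 = M$2$1" and c2c: "c2$1 = M$1$2" "c2$2 = M$2$2"
    by (simp_all add: c1_def c2_def matrix_vector_mult_def sum_2 axis_def)
  have detM: "\<bar>M$1$1 * M$2$2 - M$1$2 * M$2$1\<bar> = 1" using M(2) by (simp add: det_2)
  define v0 where "v0 = b0"
  define v1 where "v1 = c1 + b0"
  define v2 where "v2 = c2 + b0"
  have D0: "0 \<in> Delta2" "axis 1 1 \<in> Delta2" "axis 2 1 \<in> Delta2"
    by (simp_all add: Delta2_def hull_inc)
  have inS: "v0 \<in> S" "v1 \<in> S" "v2 \<in> S"
    unfolding SM v0_def v1_def v2_def c1_def c2_def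
    subgoal by (rule image_eqI[where x=0]) (simp_all add: D0)
    subgoal by (rule image_eqI[where x="axis 1 1"]) (simp_all add: D0)
    subgoal by (rule image_eqI[where x="axis 2 1"]) (simp_all add: D0)
    done
  hence inK: "v0 \<in> interior K" "v1 \<in> interior K" "v2 \<in> interior K" using S(2) by auto
  have lat: "lattice_point v0" "lattice_point v1" "lattice_point v2"
    using M(1,3) by (simp_all add: v0_def v1_def v2_def lattice_point_def c1c c2c)
  have k0: "v0 = z \<or> G v0" "v1 = z \<or> G v1" "v2 = z \<or> G v2"
    using key inK lat by blast+
  have notall: "\<not> (G v0 \<and> G v1 \<and> G v2)"
  proof
    assume g: "G v0 \<and> G v1 \<and> G v2"
    have "h \<bullet> c1 = 0" "h \<bullet> c2 = 0"
      using g by (simp_all add: G_def v0_def v1_def v2_def inner_add_right)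
    hence e: "h$1 * M$1$1 + h$2 * M$2$1 = 0" "h$1 * M$1$2 + h$2 * M$2$2 = 0"
      by (simp_all add: inner2 c1c c2c)
    have "h$1 * (M$1$1 * M$2$2 - M$1$2 * M$2$1) = M$2$2 * (h$1 * M$1$1 + h$2 * M$2$1) - M$2$1 * (h$1 * M$1$2 + h$2 * M$2$2)"
      by (simp add: algebra_simps)
    hence "h$1 = 0" using e detM by auto
    moreover have "h$2 * (M$1$1 * M$2$2 - M$1$2 * M$2$1) = M$1$1 * (h$1 * M$1$2 + h$2 * M$2$2) - M$1$2 * (h$1 * M$1$1 + h$2 * M$2$1)"
      by (simp add: algebra_simps)
    hence "h$2 = 0" using e detM by auto
    ultimately show False using h0 by (simp add: vec2_eq)
  qed
  have c1nz: "c1 \<noteq> 0" "c2 \<noteq> 0" "c1 \<noteq> c2"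
    using detM by (auto simp: vec2_eq c1c c2c)
  have fin_goal: "\<exists>al be. lattice_point al \<and> lattice_point be \<and> \<bar>al$1*be$2 - al$2*be$1\<bar> = 1 \<and>
     A k \<bullet> (z+al) = B k \<and> A k \<bullet> (z+be) = B k \<and>
     (\<forall>i\<in>F. i \<noteq> k \<longrightarrow> A i \<bullet> (z+al) < B i \<and> A i \<bullet> (z+be) < B i)"
    if "G va" "G vb" "lattice_point va" "lattice_point vb"
       "\<bar>(va - z)$1*(vb - z)$2 - (va - z)$2*(vb - z)$1\<bar> = 1" for va vb
    apply (rule exI[of _ "va - z"], rule exI[of _ "vb - z"])
    using that z(2) by (simp add: lattice_diff G_def h_def c_def)
  show ?thesis
  proof (cases "v0 = z")
    case True
    hence "v1 \<noteq> z" "v2 \<noteq> z" using c1nz by (auto simp: v0_def v1_def v2_def)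
    hence "G v1" "G v2" using k0 by auto
    moreover have "\<bar>(v1 - z)$1*(v2 - z)$2 - (v1 - z)$2*(v2 - z)$1\<bar> = 1"
      using True detM by (simp add: v0_def v1_def v2_def c1c c2c algebra_simps)
    ultimately show ?thesis using fin_goal lat by blast
  next
    case False
    hence G0: "G v0" using k0 by auto
    show ?thesis
    proof (cases "v1 = z")
      case True
      hence "v2 \<noteq> z" using c1nz by (auto simp: v1_def v2_def)
      hence "G v2" using k0 by auto
      moreover have zc: "z$1 = b0$1 + M$1$1" "z$2 = b0$2 + M$2$1"
        using True by (auto simp: v1_def vec2_eq c1c)
      have "(v0 - z)$1*(v2 - z)$2 - (v0 - z)$2*(v2 - z)$1 = - (M$1$1 * M$2$2 - M$1$2 * M$2$1)"
        by (simp add: v0_def v2_def c2c zc algebra_simps)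
      hence "\<bar>(v0 - z)$1*(v2 - z)$2 - (v0 - z)$2*(v2 - z)$1\<bar> = 1" using detM by simp
      ultimately show ?thesis using fin_goal lat G0 by blast
    next
      case False
      hence "G v1" using k0 by auto
      hence "v2 = z" using k0 notall G0 by auto
      moreover have zc: "z$1 = b0$1 + M$1$2" "z$2 = b0$2 + M$2$2"
        using \<open>v2 = z\<close> by (auto simp: v2_def vec2_eq c2c)
      have "(v0 - z)$1*(v1 - z)$2 - (v0 - z)$2*(v1 - z)$1 = M$1$1 * M$2$2 - M$1$2 * M$2$1"
        by (simp add: v0_def v1_def c1c zc algebra_simps)
      hence "\<bar>(v0 - z)$1*(v1 - z)$2 - (v0 - z)$2*(v1 - z)$1\<bar> = 1" using detM by simp
      ultimately show ?thesis using fin_goal lat G0 \<open>G v1\<close> by blast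
    qed
  qed
qed



lemma scal:
  fixes a z x :: "real^2"
  assumes "a \<bullet> z < b"
  shows "((1/(b - a \<bullet> z)) *\<^sub>R a) \<bullet> (x - z) \<le> 1 \<longleftrightarrow> a \<bullet> x \<le> b"
    and "((1/(b - a \<bullet> z)) *\<^sub>R a) \<bullet> (x - z) < 1 \<longleftrightarrow> a \<bullet> x < b"
    and "((1/(b - a \<bullet> z)) *\<^sub>R a) \<bullet> (x - z) = 1 \<longleftrightarrow> a \<bullet> x = b"
  using assms by (simp_all add: inner_diff_right divide_simps)

lemma scal_pos:
  fixes a z d :: "real^2"
  assumes "a \<bullet> z < b"
  shows "((1/(b - a \<bullet> z)) *\<^sub>R a) \<bullet> d > 0 \<longleftrightarrow> a \<bullet> d > 0"
    and "((1/(b - a \<bullet> z)) *\<^sub>R a) \<bullet> d < 0 \<longleftrightarrow> a \<bullet> d < 0"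
  using assms by (simp_all add: divide_simps)

lemma unbounded_dir:
  fixes P :: "(real^2) set"
  assumes "bounded P" "d \<noteq> 0" "\<And>t. t \<ge> 0 \<Longrightarrow> z + t *\<^sub>R d \<in> P"
  shows False
proof -
  obtain B where B: "\<And>x. x \<in> P \<Longrightarrow> norm x \<le> B" using assms(1) bounded_iff by metis
  define t where "t = (B + norm z + 1) / norm d"
  have nd: "norm d > 0" using assms(2) by simp
  have nz: "norm z \<le> B" using B[OF assms(3)[of 0]] by simp
  have Bp: "B + norm z + 1 \<ge> 0" using nz norm_ge_zero[of z] by linarith
  hence t0: "t \<ge> 0" using nd by (simp add: t_def)
  have "norm (t *\<^sub>R d) = B + norm z + 1" using nd t0 Bp by (simp add: t_def)
  moreover have "norm (t *\<^sub>R d) \<le> norm (z + t *\<^sub>R d) + norm z"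
    using norm_triangle_ineq4[of "z + t *\<^sub>R d" z] by simp
  moreover have "norm (z + t *\<^sub>R d) \<le> B" using B assms(3) t0 by blast
  ultimately show False by linarith
qed

theorem proposition4p4:
  fixes P :: "(real^2) set"
  assumes "polygon P"
    and "Z_Delta2_free P"
    and "maximal_Z_Delta2_free P"
    and "\<exists>!z. z \<in> interior P \<and> lattice_point z"
  shows "lattice_width P \<le> 3"
proof -
  have pt: "polytope P" using assms(1) by (simp add: polygon_def)
  have cP: "compact P" "convex P" using pt by (simp_all add: polytope_imp_compact polytope_imp_convex)
  have bP: "bounded P" using cP compact_imp_bounded by blast
  obtain z where z: "z \<in> interior P" "lattice_point z"
    and uniq: "\<And>y. y \<in> interior P \<Longrightarrow> lattice_point y \<Longrightarrow> y = z"
    using assms(4) by blast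
  have ah: "affine hull P = UNIV" using z affine_hull_nonempty_interior by blast
  obtain F where fin: "finite F" and PF0: "P = affine hull P \<inter> \<Inter>F"
    and hs: "\<forall>h\<in>F. \<exists>a b. a \<noteq> 0 \<and> h = {x. a \<bullet> x \<le> b}"
    and mn: "\<forall>F'. F' \<subset> F \<longrightarrow> P \<subset> affine hull P \<inter> \<Inter>F'"
    using polytope_imp_polyhedron[OF pt] unfolding polyhedron_Int_affine_minimal by blast
  obtain A B where AB: "\<And>h. h \<in> F \<Longrightarrow> A h \<noteq> 0 \<and> h = {x. A h \<bullet> x \<le> B h}"
    using hs by metis
  have PF: "P = \<Inter>F" using PF0 ah by simp
  have minF: "\<And>F'. F' \<subset> F \<Longrightarrow> P \<subset> \<Inter>F'" using mn ah by simp
  have memP: "x \<in> P \<longleftrightarrow> (\<forall>i\<in>F. A i \<bullet> x \<le> B i)" for x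
    using AB by (subst PF) blast
  have zs: "A i \<bullet> z < B i" if "i \<in> F" for i
  proof -
    have "P \<subseteq> {x. A i \<bullet> x \<le> B i}" using memP that by auto
    hence "interior P \<subseteq> {x. A i \<bullet> x < B i}"
      using interior_mono AB[OF that] interior_halfspace_le by metis
    thus ?thesis using z by auto
  qed
  have FL: "\<exists>al be. lattice_point al \<and> lattice_point be \<and> \<bar>al$1*be$2 - al$2*be$1\<bar> = 1 \<and>
     A i \<bullet> (z+al) = B i \<and> A i \<bullet> (z+be) = B i \<and>
     (\<forall>j\<in>F. j \<noteq> i \<longrightarrow> A j \<bullet> (z+al) < B j \<and> A j \<bullet> (z+be) < B j)" if "i \<in> F" for i
    by (rule facet_lattice[OF fin PF _ _ cP z _ assms(3) that]) (use AB minF uniq in blast)+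
  have "F \<noteq> {}"
  proof
    assume "F = {}"
    hence "P = UNIV" using PF by simp
    thus False using bP not_bounded_UNIV by simp
  qed
  then obtain k where k: "k \<in> F" by blast
  define nv where "nv i = (1/(B i - A i \<bullet> z)) *\<^sub>R A i" for i
  have nv_le: "nv i \<bullet> (x - z) \<le> 1 \<longleftrightarrow> A i \<bullet> x \<le> B i"
    and nv_lt: "nv i \<bullet> (x - z) < 1 \<longleftrightarrow> A i \<bullet> x < B i"
    and nv_eq: "nv i \<bullet> (x - z) = 1 \<longleftrightarrow> A i \<bullet> x = B i" if "i \<in> F" for i x
    using scal[OF zs[OF that]] by (simp_all add: nv_def)
  have nv_pos: "nv i \<bullet> d > 0 \<longleftrightarrow> A i \<bullet> d > 0" and nv_neg: "nv i \<bullet> d < 0 \<longleftrightarrow> A i \<bullet> d < 0"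
    if "i \<in> F" for i d
    using scal_pos[OF zs[OF that]] by (simp_all add: nv_def)
  have nv_lat: "lattice_point (nv i)" if i: "i \<in> F" for i
  proof -
    obtain al be where "lattice_point al" "lattice_point be" "\<bar>al$1*be$2 - al$2*be$1\<bar> = 1"
      "A i \<bullet> (z+al) = B i" "A i \<bullet> (z+be) = B i"
      using FL[OF i] by blast
    moreover have "nv i \<bullet> al = 1" "nv i \<bullet> be = 1"
      using nv_eq[OF i, of "z+al"] nv_eq[OF i, of "z+be"] calculation by simp_all
    ultimately show ?thesis using lattice_normal by blast
  qed
  obtain al be where lab: "lattice_point al" "lattice_point be" "\<bar>al$1*be$2 - al$2*be$1\<bar> = 1"
      "A k \<bullet> (z+al) = B k" "A k \<bullet> (z+be) = B k"
    and oth: "\<forall>i\<in>F. i \<noteq> k \<longrightarrow> A i \<bullet> (z+al) < B i \<and> A i \<bullet> (z+be) < B i"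
    using FL[OF k] by blast
  define u where "u = nv k"
  have ua: "u \<bullet> al = 1" "u \<bullet> be = 1"
    using nv_eq[OF k, of "z+al"] nv_eq[OF k, of "z+be"] lab by (simp_all add: u_def)
  define d where "d = be - al"
  have d0: "d \<noteq> 0" using lab(3) by (auto simp: d_def vec2_eq)
  have kd: "A k \<bullet> d = 0" using lab(4,5) by (simp add: d_def inner_diff_right inner_add_right)
  obtain r where r: "r \<in> F" "A r \<bullet> d > 0"
  proof (rule ccontr)
    assume "\<not> thesis"
    hence nr: "\<forall>i\<in>F. A i \<bullet> d \<le> 0" using that not_le by blast
    have "z + t *\<^sub>R d \<in> P" if "t \<ge> 0" for t
      unfolding memP
    proof
      fix i assume i: "i \<in> F"
      have "A i \<bullet> (z + t *\<^sub>R d) = A i \<bullet> z + t * (A i \<bullet> d)" by (simp add: inner_add_right)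
      also have "\<dots> \<le> A i \<bullet> z" using nr i that by (simp add: mult_nonneg_nonpos)
      finally show "A i \<bullet> (z + t *\<^sub>R d) \<le> B i" using zs[OF i] by linarith
    qed
    thus False using unbounded_dir[OF bP d0] by blast
  qed
  obtain l where l: "l \<in> F" "A l \<bullet> d < 0"
  proof (rule ccontr)
    assume "\<not> thesis"
    hence nr: "\<forall>i\<in>F. A i \<bullet> (-d) \<le> 0" using that not_le by force
    have "z + t *\<^sub>R (-d) \<in> P" if "t \<ge> 0" for t
      unfolding memP
    proof
      fix i assume i: "i \<in> F"
      have "A i \<bullet> (z + t *\<^sub>R (-d)) = A i \<bullet> z + t * (A i \<bullet> (-d))" by (simp only: inner_add_right inner_scaleR_right)
      also have "\<dots> \<le> A i \<bullet> z" using nr i that by (simp add: mult_nonneg_nonpos)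
      finally show "A i \<bullet> (z + t *\<^sub>R (-d)) \<le> B i" using zs[OF i] by linarith
    qed
    moreover have "-d \<noteq> 0" using d0 by simp
    ultimately show False using unbounded_dir[OF bP] by blast
  qed
  have rk: "r \<noteq> k" "l \<noteq> k" using r l kd by auto
  have ral: "nv r \<bullet> al < 1" "nv r \<bullet> be < 1" "nv l \<bullet> al < 1"
    using oth rk r(1) l(1) nv_lt[OF r(1), of "z+al"] nv_lt[OF r(1), of "z+be"]
      nv_lt[OF l(1), of "z+al"] by auto
  have bound: "u \<bullet> z - 2 \<le> u \<bullet> x \<and> u \<bullet> x \<le> (u \<bullet> z - 2) + 3" if x: "x \<in> P" for x
  proof -
    have "u \<bullet> (x - z) \<le> 1" using nv_le[OF k] x memP k by (simp add: u_def)
    moreover have "- (u \<bullet> (x - z)) \<le> 2"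
    proof (rule comb[OF nv_lat[OF r(1)] nv_lat[OF l(1)] lab(1,2) ua lab(3)])
      show "nv r \<bullet> (be - al) > 0" using r nv_pos[OF r(1)] by (simp add: d_def)
      show "nv l \<bullet> (be - al) < 0" using l nv_neg[OF l(1)] by (simp add: d_def)
      show "nv r \<bullet> al < 1" "nv r \<bullet> be < 1" "nv l \<bullet> al < 1" by (rule ral)+
      show "nv r \<bullet> (x - z) \<le> 1" using nv_le[OF r(1)] x memP r(1) by simp
      show "nv l \<bullet> (x - z) \<le> 1" using nv_le[OF l(1)] x memP l(1) by simp
    qed
    ultimately show ?thesis by (simp add: inner_diff_right)
  qed
  have "u \<noteq> 0" using ua by auto
  moreover have "P \<noteq> {}" using z interior_subset by blast
  ultimately show ?thesis
    using width_le[OF nv_lat[OF k, folded u_def]] bP bound by blast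
qed

end
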